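(* Let $r=\frac{2}{3\sqrt{3}}$. Then $$\mathcal{P}^3=\{c_1+c_4\mathbf{j_1}+c_6\mathbf{j_2} : c_1,c_4,c_6\in\mathbb{R},\ |c_1|+|c_4|+|c_6|\leq r\};$$ that is, under the identification $c_1+c_4\mathbf{j_1}+c_6\mathbf{j_2}\leftrightarrow(c_1,c_4,c_6)\in\mathbb{R}^3$, the Perplexbric is the regular octahedron centered at the origin with vertices $\pm r$ on the coordinate axes, whose edges have length $\frac{2\sqrt{2}}{3\sqrt{3}}$.
   Context: The tricomplex numbers $\mathbb{M}(3)$ form the commutative real algebra generated by commuting units $\mathbf{i_1},\mathbf{i_2},\mathbf{i_3}$ with $\mathbf{i_k}^2=-1$; set $\mathbf{j_1}=\mathbf{i_1}\mathbf{i_2}$, $\mathbf{j_2}=\mathbf{i_1}\mathbf{i_3}$, $\mathbf{j_3}=\mathbf{i_2}\mathbf{i_3}$, $\mathbf{i_4}=\mathbf{i_1}\mathbf{i_2}\mathbf{i_3}$, with real basis $1,\mathbf{i_1},\mathbf{i_2},\mathbf{i_3},\mathbf{i_4},\mathbf{j_1},\mathbf{j_2},\mathbf{j_3}$ and Euclidean norm on coordinates. For $c\in\mathbb{M}(3)$, $Q_{3,c}(\eta)=\eta^3+c$ and $Q_{3,c}^m$ is its $m$-fold iterate. The Perplexbric is $\mathcal{P}^3=\{c=c_1+c_4\mathbf{j_1}+c_6\mathbf{j_2} : c_1,c_4,c_6\in\mathbb{R},\ (Q_{3,c}^m(0))_{m\geq1}\text{ bounded}\}$. *)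

theory Defs
  imports Complex_Main
begin

(* Tricomplex numbers M(3): an element is represented by its 8 real coordinates
   x 0 .. x 7, indexed by bitmasks S \<subseteq> {1,2,3} (bit 0 = i1, bit 1 = i2, bit 2 = i3).
   Basis: 0 = 1, 1 = i1, 2 = i2, 4 = i3, 3 = j1 = i1 i2, 5 = j2 = i1 i3,
   6 = j3 = i2 i3, 7 = i4 = i1 i2 i3.  Coordinates at indices >= 8 are ignored
   (and are 0 for every element we build). *)
type_synonym tricomplex = "nat \<Rightarrow> real"

(* e_S * e_T = (-1)^|S \<inter> T| * e_(S xor T), since the units commute and square to -1 *)
definition tc_sign :: "nat \<Rightarrow> nat \<Rightarrow> real" where
  "tc_sign a b = (-1) ^ card {i. i < 3 \<and> bit a i \<and> bit b i}"

definition tc_mult :: "tricomplex \<Rightarrow> tricomplex \<Rightarrow> tricomplex" where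
  "tc_mult x y = (\<lambda>k. if k < 8
      then (\<Sum>a<8. tc_sign a (xor a k) * x a * y (xor a k))
      else 0)"

definition tc_add :: "tricomplex \<Rightarrow> tricomplex \<Rightarrow> tricomplex" where
  "tc_add x y = (\<lambda>k. if k < 8 then x k + y k else 0)"

definition tc_zero :: tricomplex where
  "tc_zero = (\<lambda>k. 0)"

definition tc_norm :: "tricomplex \<Rightarrow> real" where
  "tc_norm x = sqrt (\<Sum>k<8. (x k)\<^sup>2)"

definition Q3 :: "tricomplex \<Rightarrow> tricomplex \<Rightarrow> tricomplex" where
  "Q3 c \<eta> = tc_add (tc_mult (tc_mult \<eta> \<eta>) \<eta>) c"

definition tc_of :: "real \<Rightarrow> real \<Rightarrow> real \<Rightarrow> tricomplex" where
  "tc_of c1 c4 c6 = (\<lambda>k. if k = 0 then c1 else if k = 3 then c4 else if k = 5 then c6 else 0)"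

definition perplexbric :: "tricomplex set" where
  "perplexbric = {tc_of c1 c4 c6 | c1 c4 c6.
      \<exists>B. \<forall>m\<ge>1. tc_norm ((Q3 (tc_of c1 c4 c6) ^^ m) tc_zero) \<le> B}"

end

theory Submission imports Defs begin
lemma three: "i < 3 \<longleftrightarrow> i = 0 \<or> i = 1 \<or> i = (2::nat)" by auto
lemma set3: "{i::nat. i < 3 \<and> P i} = (if P 0 then {0} else {}) \<union> (if P 1 then {1} else {}) \<union> (if P 2 then {2} else {})"
proof (rule set_eqI)
  fix i :: nat
  show "i \<in> {i::nat. i < 3 \<and> P i} \<longleftrightarrow> i \<in> (if P 0 then {0} else {}) \<union> (if P 1 then {1} else {}) \<union> (if P 2 then {2} else {})"
  proof
    assume "i \<in> {i::nat. i < 3 \<and> P i}"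
    then have "i = 0 \<or> i = 1 \<or> i = 2" "P i" using three by auto
    then show "i \<in> (if P 0 then {0} else {}) \<union> (if P 1 then {1} else {}) \<union> (if P 2 then {2} else {})"
      by (elim disjE) auto
  next
    assume "i \<in> (if P 0 then {0} else {}) \<union> (if P 1 then {1} else {}) \<union> (if P 2 then {2} else {})"
    then show "i \<in> {i::nat. i < 3 \<and> P i}" by (auto split: if_splits)
  qed
qed
lemma bitSuc0[simp]: "bit (Suc 0) n \<longleftrightarrow> n = 0"
  using bit_1_iff[where 'a=nat, of n] by (simp only: One_nat_def)
lemma xt_0_0: "xor (0::nat) 0 = 0" by simp
lemma xt_0_1: "xor (0::nat) 1 = 1" by simp
lemma xt_0_2: "xor (0::nat) 2 = 2" by simp
lemma xt_0_3: "xor (0::nat) 3 = 3" by simp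
lemma xt_0_4: "xor (0::nat) 4 = 4" by simp
lemma xt_0_5: "xor (0::nat) 5 = 5" by simp
lemma xt_0_6: "xor (0::nat) 6 = 6" by simp
lemma xt_0_7: "xor (0::nat) 7 = 7" by simp
lemma xt_1_0: "xor (1::nat) 0 = 1" by simp
lemma xt_1_1: "xor (1::nat) 1 = 0" by simp
lemma xt_1_2: "xor (1::nat) 2 = 3" by simp
lemma xt_1_3: "xor (1::nat) 3 = 2" by simp
lemma xt_1_4: "xor (1::nat) 4 = 5" by simp
lemma xt_1_5: "xor (1::nat) 5 = 4" by simp
lemma xt_1_6: "xor (1::nat) 6 = 7" by simp
lemma xt_1_7: "xor (1::nat) 7 = 6" by simp
lemma xt_2_0: "xor (2::nat) 0 = 2" by simp
lemma xt_2_1: "xor (2::nat) 1 = 3" by simp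
lemma xt_2_2: "xor (2::nat) 2 = 0" by simp
lemma xt_2_3: "xor (2::nat) 3 = 1" by simp
lemma xt_2_4: "xor (2::nat) 4 = 6" by simp
lemma xt_2_5: "xor (2::nat) 5 = 7" by simp
lemma xt_2_6: "xor (2::nat) 6 = 4" by simp
lemma xt_2_7: "xor (2::nat) 7 = 5" by simp
lemma xt_3_0: "xor (3::nat) 0 = 3" by simp
lemma xt_3_1: "xor (3::nat) 1 = 2" by simp
lemma xt_3_2: "xor (3::nat) 2 = 1" by simp
lemma xt_3_3: "xor (3::nat) 3 = 0" by simp
lemma xt_3_4: "xor (3::nat) 4 = 7" by simp
lemma xt_3_5: "xor (3::nat) 5 = 6" by simp
lemma xt_3_6: "xor (3::nat) 6 = 5" by simp
lemma xt_3_7: "xor (3::nat) 7 = 4" by simp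
lemma xt_4_0: "xor (4::nat) 0 = 4" by simp
lemma xt_4_1: "xor (4::nat) 1 = 5" by simp
lemma xt_4_2: "xor (4::nat) 2 = 6" by simp
lemma xt_4_3: "xor (4::nat) 3 = 7" by simp
lemma xt_4_4: "xor (4::nat) 4 = 0" by simp
lemma xt_4_5: "xor (4::nat) 5 = 1" by simp
lemma xt_4_6: "xor (4::nat) 6 = 2" by simp
lemma xt_4_7: "xor (4::nat) 7 = 3" by simp
lemma xt_5_0: "xor (5::nat) 0 = 5" by simp
lemma xt_5_1: "xor (5::nat) 1 = 4" by simp
lemma xt_5_2: "xor (5::nat) 2 = 7" by simp
lemma xt_5_3: "xor (5::nat) 3 = 6" by simp
lemma xt_5_4: "xor (5::nat) 4 = 1" by simp
lemma xt_5_5: "xor (5::nat) 5 = 0" by simp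
lemma xt_5_6: "xor (5::nat) 6 = 3" by simp
lemma xt_5_7: "xor (5::nat) 7 = 2" by simp
lemma xt_6_0: "xor (6::nat) 0 = 6" by simp
lemma xt_6_1: "xor (6::nat) 1 = 7" by simp
lemma xt_6_2: "xor (6::nat) 2 = 4" by simp
lemma xt_6_3: "xor (6::nat) 3 = 5" by simp
lemma xt_6_4: "xor (6::nat) 4 = 2" by simp
lemma xt_6_5: "xor (6::nat) 5 = 3" by simp
lemma xt_6_6: "xor (6::nat) 6 = 0" by simp
lemma xt_6_7: "xor (6::nat) 7 = 1" by simp
lemma xt_7_0: "xor (7::nat) 0 = 7" by simp
lemma xt_7_1: "xor (7::nat) 1 = 6" by simp
lemma xt_7_2: "xor (7::nat) 2 = 5" by simp
lemma xt_7_3: "xor (7::nat) 3 = 4" by simp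
lemma xt_7_4: "xor (7::nat) 4 = 3" by simp
lemma xt_7_5: "xor (7::nat) 5 = 2" by simp
lemma xt_7_6: "xor (7::nat) 6 = 1" by simp
lemma xt_7_7: "xor (7::nat) 7 = 0" by simp
lemma st_0_0: "tc_sign 0 0 = 1" by (simp add: tc_sign_def set3)
lemma st_0_1: "tc_sign 0 1 = 1" by (simp add: tc_sign_def set3)
lemma st_0_2: "tc_sign 0 2 = 1" by (simp add: tc_sign_def set3)
lemma st_0_3: "tc_sign 0 3 = 1" by (simp add: tc_sign_def set3)
lemma st_0_4: "tc_sign 0 4 = 1" by (simp add: tc_sign_def set3)
lemma st_0_5: "tc_sign 0 5 = 1" by (simp add: tc_sign_def set3)
lemma st_0_6: "tc_sign 0 6 = 1" by (simp add: tc_sign_def set3)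
lemma st_0_7: "tc_sign 0 7 = 1" by (simp add: tc_sign_def set3)
lemma st_1_0: "tc_sign 1 0 = 1" by (simp add: tc_sign_def set3)
lemma st_1_1: "tc_sign 1 1 = -1" by (simp add: tc_sign_def set3)
lemma st_1_2: "tc_sign 1 2 = 1" by (simp add: tc_sign_def set3)
lemma st_1_3: "tc_sign 1 3 = -1" by (simp add: tc_sign_def set3)
lemma st_1_4: "tc_sign 1 4 = 1" by (simp add: tc_sign_def set3)
lemma st_1_5: "tc_sign 1 5 = -1" by (simp add: tc_sign_def set3)
lemma st_1_6: "tc_sign 1 6 = 1" by (simp add: tc_sign_def set3)
lemma st_1_7: "tc_sign 1 7 = -1" by (simp add: tc_sign_def set3)
lemma st_2_0: "tc_sign 2 0 = 1" by (simp add: tc_sign_def set3)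
lemma st_2_1: "tc_sign 2 1 = 1" by (simp add: tc_sign_def set3)
lemma st_2_2: "tc_sign 2 2 = -1" by (simp add: tc_sign_def set3)
lemma st_2_3: "tc_sign 2 3 = -1" by (simp add: tc_sign_def set3)
lemma st_2_4: "tc_sign 2 4 = 1" by (simp add: tc_sign_def set3)
lemma st_2_5: "tc_sign 2 5 = 1" by (simp add: tc_sign_def set3)
lemma st_2_6: "tc_sign 2 6 = -1" by (simp add: tc_sign_def set3)
lemma st_2_7: "tc_sign 2 7 = -1" by (simp add: tc_sign_def set3)
lemma st_3_0: "tc_sign 3 0 = 1" by (simp add: tc_sign_def set3)
lemma st_3_1: "tc_sign 3 1 = -1" by (simp add: tc_sign_def set3)
lemma st_3_2: "tc_sign 3 2 = -1" by (simp add: tc_sign_def set3)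
lemma st_3_3: "tc_sign 3 3 = 1" by (simp add: tc_sign_def set3)
lemma st_3_4: "tc_sign 3 4 = 1" by (simp add: tc_sign_def set3)
lemma st_3_5: "tc_sign 3 5 = -1" by (simp add: tc_sign_def set3)
lemma st_3_6: "tc_sign 3 6 = -1" by (simp add: tc_sign_def set3)
lemma st_3_7: "tc_sign 3 7 = 1" by (simp add: tc_sign_def set3)
lemma st_4_0: "tc_sign 4 0 = 1" by (simp add: tc_sign_def set3)
lemma st_4_1: "tc_sign 4 1 = 1" by (simp add: tc_sign_def set3)
lemma st_4_2: "tc_sign 4 2 = 1" by (simp add: tc_sign_def set3)
lemma st_4_3: "tc_sign 4 3 = 1" by (simp add: tc_sign_def set3)
lemma st_4_4: "tc_sign 4 4 = -1" by (simp add: tc_sign_def set3)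
lemma st_4_5: "tc_sign 4 5 = -1" by (simp add: tc_sign_def set3)
lemma st_4_6: "tc_sign 4 6 = -1" by (simp add: tc_sign_def set3)
lemma st_4_7: "tc_sign 4 7 = -1" by (simp add: tc_sign_def set3)
lemma st_5_0: "tc_sign 5 0 = 1" by (simp add: tc_sign_def set3)
lemma st_5_1: "tc_sign 5 1 = -1" by (simp add: tc_sign_def set3)
lemma st_5_2: "tc_sign 5 2 = 1" by (simp add: tc_sign_def set3)
lemma st_5_3: "tc_sign 5 3 = -1" by (simp add: tc_sign_def set3)
lemma st_5_4: "tc_sign 5 4 = -1" by (simp add: tc_sign_def set3)
lemma st_5_5: "tc_sign 5 5 = 1" by (simp add: tc_sign_def set3)
lemma st_5_6: "tc_sign 5 6 = -1" by (simp add: tc_sign_def set3)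
lemma st_5_7: "tc_sign 5 7 = 1" by (simp add: tc_sign_def set3)
lemma st_6_0: "tc_sign 6 0 = 1" by (simp add: tc_sign_def set3)
lemma st_6_1: "tc_sign 6 1 = 1" by (simp add: tc_sign_def set3)
lemma st_6_2: "tc_sign 6 2 = -1" by (simp add: tc_sign_def set3)
lemma st_6_3: "tc_sign 6 3 = -1" by (simp add: tc_sign_def set3)
lemma st_6_4: "tc_sign 6 4 = -1" by (simp add: tc_sign_def set3)
lemma st_6_5: "tc_sign 6 5 = -1" by (simp add: tc_sign_def set3)
lemma st_6_6: "tc_sign 6 6 = 1" by (simp add: tc_sign_def set3)
lemma st_6_7: "tc_sign 6 7 = 1" by (simp add: tc_sign_def set3)
lemma st_7_0: "tc_sign 7 0 = 1" by (simp add: tc_sign_def set3)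
lemma st_7_1: "tc_sign 7 1 = -1" by (simp add: tc_sign_def set3)
lemma st_7_2: "tc_sign 7 2 = -1" by (simp add: tc_sign_def set3)
lemma st_7_3: "tc_sign 7 3 = 1" by (simp add: tc_sign_def set3)
lemma st_7_4: "tc_sign 7 4 = -1" by (simp add: tc_sign_def set3)
lemma st_7_5: "tc_sign 7 5 = 1" by (simp add: tc_sign_def set3)
lemma st_7_6: "tc_sign 7 6 = 1" by (simp add: tc_sign_def set3)
lemma st_7_7: "tc_sign 7 7 = -1" by (simp add: tc_sign_def set3)
lemmas tabs = xt_0_0 xt_0_1 xt_0_2 xt_0_3 xt_0_4 xt_0_5 xt_0_6 xt_0_7 xt_1_0 xt_1_1 xt_1_2 xt_1_3 xt_1_4 xt_1_5 xt_1_6 xt_1_7 xt_2_0 xt_2_1 xt_2_2 xt_2_3 xt_2_4 xt_2_5 xt_2_6 xt_2_7 xt_3_0 xt_3_1 xt_3_2 xt_3_3 xt_3_4 xt_3_5 xt_3_6 xt_3_7 xt_4_0 xt_4_1 xt_4_2 xt_4_3 xt_4_4 xt_4_5 xt_4_6 xt_4_7 xt_5_0 xt_5_1 xt_5_2 xt_5_3 xt_5_4 xt_5_5 xt_5_6 xt_5_7 xt_6_0 xt_6_1 xt_6_2 xt_6_3 xt_6_4 xt_6_5 xt_6_6 xt_6_7 xt_7_0 xt_7_1 xt_7_2 xt_7_3 xt_7_4 xt_7_5 xt_7_6 xt_7_7 st_0_0 st_0_1 st_0_2 st_0_3 st_0_4 st_0_5 st_0_6 st_0_7 st_1_0 st_1_1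 st_1_2 st_1_3 st_1_4 st_1_5 st_1_6 st_1_7 st_2_0 st_2_1 st_2_2 st_2_3 st_2_4 st_2_5 st_2_6 st_2_7 st_3_0 st_3_1 st_3_2 st_3_3 st_3_4 st_3_5 st_3_6 st_3_7 st_4_0 st_4_1 st_4_2 st_4_3 st_4_4 st_4_5 st_4_6 st_4_7 st_5_0 st_5_1 st_5_2 st_5_3 st_5_4 st_5_5 st_5_6 st_5_7 st_6_0 st_6_1 st_6_2 st_6_3 st_6_4 st_6_5 st_6_6 st_6_7 st_7_0 st_7_1 st_7_2 st_7_3 st_7_4 st_7_5 st_7_6 st_7_7
lemma sum8: "(\<Sum>a<8. f a) = f 0 + f 1 + f 2 + f 3 + f 4 + f 5 + f 6 + (f 7::real)" for f :: "nat \<Rightarrow> real"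
  by (simp add: eval_nat_numeral)

definition supp :: "tricomplex \<Rightarrow> bool" where
 "supp x \<longleftrightarrow> x 1 = 0 \<and> x 2 = 0 \<and> x 4 = 0 \<and> x 7 = 0 \<and> (\<forall>k\<ge>8. x k = 0)"
lemma mult0: "supp x \<Longrightarrow> supp y \<Longrightarrow> tc_mult x y 0 = x 0 * y 0 + x 3 * y 3 + x 5 * y 5 + x 6 * y 6"
  unfolding supp_def tc_mult_def by (simp only: sum8 tabs, simp)
lemma mult3: "supp x \<Longrightarrow> supp y \<Longrightarrow> tc_mult x y 3 = x 0 * y 3 + x 3 * y 0 - x 5 * y 6 - x 6 * y 5"
  unfolding supp_def tc_mult_def by (simp only: sum8 tabs, simp)
lemma mult5: "supp x \<Longrightarrow> supp y \<Longrightarrow> tc_mult x y 5 = x 0 * y 5 + x 5 * y 0 - x 3 * y 6 - x 6 * y 3"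
  unfolding supp_def tc_mult_def by (simp only: sum8 tabs, simp)
lemma mult6: "supp x \<Longrightarrow> supp y \<Longrightarrow> tc_mult x y 6 = x 0 * y 6 + x 6 * y 0 - x 3 * y 5 - x 5 * y 3"
  unfolding supp_def tc_mult_def by (simp only: sum8 tabs, simp)
lemma mult1: "supp x \<Longrightarrow> supp y \<Longrightarrow> tc_mult x y 1 = 0"
  unfolding supp_def tc_mult_def by (simp only: sum8 tabs, simp)
lemma mult2: "supp x \<Longrightarrow> supp y \<Longrightarrow> tc_mult x y 2 = 0"
  unfolding supp_def tc_mult_def by (simp only: sum8 tabs, simp)
lemma mult4: "supp x \<Longrightarrow> supp y \<Longrightarrow> tc_mult x y 4 = 0"
  unfolding supp_def tc_mult_def by (simp only: sum8 tabs, simp)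
lemma mult7: "supp x \<Longrightarrow> supp y \<Longrightarrow> tc_mult x y 7 = 0"
  unfolding supp_def tc_mult_def by (simp only: sum8 tabs, simp)

lemma mult_ge8: "k \<ge> 8 \<Longrightarrow> tc_mult x y k = 0" by (simp add: tc_mult_def)
lemma supp_mult: "supp x \<Longrightarrow> supp y \<Longrightarrow> supp (tc_mult x y)"
  using mult1 mult2 mult4 mult7 mult_ge8 unfolding supp_def by blast
lemma supp_add: "supp x \<Longrightarrow> supp y \<Longrightarrow> supp (tc_add x y)"
  unfolding supp_def tc_add_def by simp
lemma supp_Q3: "supp c \<Longrightarrow> supp x \<Longrightarrow> supp (Q3 c x)"
  unfolding Q3_def by (intro supp_add supp_mult)
definition phi :: "real \<Rightarrow> real \<Rightarrow> tricomplex \<Rightarrow> real" where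
  "phi s t x = x 0 + s * x 3 + t * x 5 - s * t * x 6"
lemma phi_mult: "s \<in> {-1,1} \<Longrightarrow> t \<in> {-1,1} \<Longrightarrow> supp x \<Longrightarrow> supp y \<Longrightarrow>
   phi s t (tc_mult x y) = phi s t x * phi s t y"
  by (auto simp: phi_def mult0 mult3 mult5 mult6 algebra_simps)
lemma phi_add: "phi s t (tc_add x y) = phi s t x + phi s t y"
  by (simp add: phi_def tc_add_def algebra_simps)
lemma phi_Q3: "s \<in> {-1,1} \<Longrightarrow> t \<in> {-1,1} \<Longrightarrow> supp c \<Longrightarrow> supp x \<Longrightarrow>
   phi s t (Q3 c x) = phi s t x ^ 3 + phi s t c"
  unfolding Q3_def by (simp add: phi_add phi_mult supp_mult power3_eq_cube)
definition orb :: "real \<Rightarrow> nat \<Rightarrow> real" where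
  "orb a m = ((\<lambda>x. x ^ 3 + a) ^^ m) 0"
lemma orb_0[simp]: "orb a 0 = 0" by (simp add: orb_def)
lemma orb_Suc: "orb a (Suc m) = orb a m ^ 3 + a" by (simp add: orb_def)
lemma supp_zero: "supp tc_zero" by (simp add: supp_def tc_zero_def)
lemma orbit: "s \<in> {-1,1} \<Longrightarrow> t \<in> {-1,1} \<Longrightarrow> supp c \<Longrightarrow>
   supp ((Q3 c ^^ m) tc_zero) \<and> phi s t ((Q3 c ^^ m) tc_zero) = orb (phi s t c) m"
proof (induction m)
  case 0 then show ?case by (simp add: supp_def phi_def tc_zero_def)
next
  case (Suc m) then show ?case by (simp add: supp_Q3 phi_Q3 orb_Suc)
qed
lemma norm_supp: "supp x \<Longrightarrow> tc_norm x = sqrt (x 0 ^ 2 + x 3 ^ 2 + x 5 ^ 2 + x 6 ^ 2)"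
  unfolding tc_norm_def supp_def by (simp add: sum8)
lemma four: "4 * (x 0 ^ 2 + x 3 ^ 2 + x 5 ^ 2 + x 6 ^ 2) =
   phi 1 1 x ^ 2 + phi 1 (-1) x ^ 2 + phi (-1) 1 x ^ 2 + phi (-1) (-1) x ^ 2"
  by (simp add: phi_def power2_eq_square algebra_simps)
lemma phi_le: assumes "s \<in> {-1,1}" "t \<in> {-1,1}" "supp x"
  shows "\<bar>phi s t x\<bar> \<le> 2 * tc_norm x"
proof -
  let ?S = "x 0 ^ 2 + x 3 ^ 2 + x 5 ^ 2 + x 6 ^ 2"
  have "phi s t x ^ 2 \<le> 4 * ?S" using assms unfolding four
    by (auto simp del: power2_eq_square)
  then have "sqrt (phi s t x ^ 2) \<le> sqrt (4 * ?S)" by (rule real_sqrt_le_mono)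
  also have "sqrt (4 * ?S) = 2 * sqrt ?S" by (subst real_sqrt_mult) simp
  finally show ?thesis using assms by (simp add: norm_supp)
qed
lemma sq4: assumes "0\<le>a" "0\<le>b" "0\<le>c" "0\<le>d"
  shows "a^2+b^2+c^2+d^2 \<le> (a+b+c+d::real)^2"
proof -
  have e: "(a+b+c+d)^2 = a^2+b^2+c^2+d^2 + 2*(a*b+a*c+a*d+b*c+b*d+c*d)"
    by (simp add: power2_eq_square algebra_simps)
  have "0 \<le> a*b+a*c+a*d+b*c+b*d+c*d" using assms by simp
  then show ?thesis unfolding e by simp
qed
lemma norm_le: assumes "supp x"
  shows "tc_norm x \<le> \<bar>phi 1 1 x\<bar> + \<bar>phi 1 (-1) x\<bar> + \<bar>phi (-1) 1 x\<bar> + \<bar>phi (-1) (-1) x\<bar>"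
proof -
  let ?S = "x 0 ^ 2 + x 3 ^ 2 + x 5 ^ 2 + x 6 ^ 2"
  let ?T = "\<bar>phi 1 1 x\<bar> + \<bar>phi 1 (-1) x\<bar> + \<bar>phi (-1) 1 x\<bar> + \<bar>phi (-1) (-1) x\<bar>"
  have "?S \<le> 4 * ?S" by simp
  also have "\<dots> \<le> ?T ^ 2" unfolding four
    by (rule sq4[of "\<bar>phi 1 1 x\<bar>" "\<bar>phi 1 (-1) x\<bar>" "\<bar>phi (-1) 1 x\<bar>" "\<bar>phi (-1) (-1) x\<bar>", simplified])
  finally have "sqrt ?S \<le> sqrt (?T ^ 2)" by (rule real_sqrt_le_mono)
  moreover have "sqrt (?T ^ 2) = ?T" by (subst real_sqrt_abs, rule abs_of_nonneg, simp)
  moreover have "tc_norm x = sqrt ?S" using assms by (rule norm_supp)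
  ultimately show ?thesis by linarith
qed

lemma q_facts: "1 / sqrt 3 > 0" "3 * (1 / sqrt 3) ^ 2 = 1" "2 / (3 * sqrt 3) = 2 * (1 / sqrt 3) ^ 3"
proof -
  show "1 / sqrt 3 > 0" by simp
  show "3 * (1 / sqrt 3) ^ 2 = 1" by (simp add: power_divide)
  have "sqrt 3 ^ 3 = 3 * sqrt 3" by (simp add: power3_eq_cube power2_eq_square[symmetric])
  then show "2 / (3 * sqrt 3) = 2 * (1 / sqrt 3) ^ 3" by (simp add: power_divide)
qed

lemma orb_small: assumes q: "q > 0" "3 * q ^ 2 = 1" and a: "\<bar>a\<bar> \<le> 2 * q ^ 3"
  shows "\<bar>orb a m\<bar> \<le> q"
proof (induction m)
  case 0 then show ?case using q by simp
next
  case (Suc m)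
  have "\<bar>orb a m\<bar> ^ 3 \<le> q ^ 3" using Suc by (intro power_mono) auto
  moreover have "\<bar>orb a m ^ 3 + a\<bar> \<le> \<bar>orb a m\<bar> ^ 3 + \<bar>a\<bar>"
    by (metis abs_triangle_ineq power_abs)
  moreover have "q ^ 3 + 2 * q ^ 3 = q"
  proof -
    have "q ^ 3 + 2 * q ^ 3 = q * (3 * q ^ 2)" by (simp add: power3_eq_cube power2_eq_square algebra_simps)
    then show ?thesis using q(2) by simp
  qed
  ultimately show ?case using a unfolding orb_Suc by linarith
qed

lemma orb_neg: "orb (-a) m = - orb a m"
  by (induction m) (simp_all add: orb_Suc)

lemma orb_big: assumes q: "q > 0" "3 * q ^ 2 = 1" and a: "a > 2 * q ^ 3"
  shows "orb a m \<ge> real m * (a - 2 * q ^ 3) \<and> orb a m \<ge> 0"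
proof (induction m)
  case 0 then show ?case by simp
next
  case (Suc m)
  define y where "y = orb a m"
  have y0: "y \<ge> 0" using Suc y_def by simp
  have "y ^ 3 - y + 2 * q ^ 3 = y ^ 3 - 3 * q ^ 2 * y + 2 * q ^ 3" using q(2) by simp
  also have "\<dots> = (y - q) ^ 2 * (y + 2 * q)" by (simp add: power2_eq_square power3_eq_cube algebra_simps)
  also have "\<dots> \<ge> 0" using y0 q by simp
  finally have "y ^ 3 + a \<ge> y + (a - 2 * q ^ 3)" by simp
  moreover have "y \<ge> real m * (a - 2 * q ^ 3)" using Suc y_def by simp
  ultimately show ?case using a y0 by (simp add: orb_Suc y_def[symmetric] algebra_simps)
qed

lemma bounded_iff: assumes q: "q > 0" "3 * q ^ 2 = 1"
  shows "(\<exists>B. \<forall>m. \<bar>orb a m\<bar> \<le> B) \<longleftrightarrow> \<bar>a\<bar> \<le> 2 * q ^ 3"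
proof
  assume "\<bar>a\<bar> \<le> 2 * q ^ 3"
  then show "\<exists>B. \<forall>m. \<bar>orb a m\<bar> \<le> B" using orb_small[OF q] by blast
next
  assume "\<exists>B. \<forall>m. \<bar>orb a m\<bar> \<le> B"
  then obtain B where B: "\<And>m. \<bar>orb a m\<bar> \<le> B" by blast
  have False if b: "b > 2 * q ^ 3" and bb: "\<And>m. orb b m \<le> B" for b
  proof -
    have "b - 2 * q ^ 3 > 0" using b by simp
    then obtain n where n: "B < real n * (b - 2 * q ^ 3)" using reals_Archimedean3 by blast
    then show False using orb_big[OF q b, of n] bb[of n] by linarith
  qed
  moreover have "orb a m \<le> B" "orb (-a) m \<le> B" for m
    using B[of m] by (auto simp: orb_neg)
  ultimately show "\<bar>a\<bar> \<le> 2 * q ^ 3" by (metis abs_le_iff linorder_not_le minus_minus)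
qed

lemma supp_tc_of: "supp (tc_of c1 c4 c6)" by (simp add: supp_def tc_of_def)
lemma phi_tc_of: "phi s t (tc_of c1 c4 c6) = c1 + s * c4 + t * c6" by (simp add: phi_def tc_of_def)

lemma key:
  "(\<exists>B. \<forall>m\<ge>1. tc_norm ((Q3 (tc_of c1 c4 c6) ^^ m) tc_zero) \<le> B) \<longleftrightarrow>
   \<bar>c1\<bar> + \<bar>c4\<bar> + \<bar>c6\<bar> \<le> 2 / (3 * sqrt 3)"
proof -
  define q :: real where "q = 1 / sqrt 3"
  have q: "q > 0" "3 * q ^ 2 = 1" and r: "2 / (3 * sqrt 3) = 2 * q ^ 3"
    using q_facts unfolding q_def by auto
  define c where "c = tc_of c1 c4 c6"
  define z where "z m = (Q3 c ^^ m) tc_zero" for m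
  have sc: "supp c" unfolding c_def by (rule supp_tc_of)
  have zs: "supp (z m)" for m unfolding z_def using orbit[OF _ _ sc, of 1 1] by simp
  have zp: "s \<in> {-1,1} \<Longrightarrow> t \<in> {-1,1} \<Longrightarrow> phi s t (z m) = orb (c1 + s * c4 + t * c6) m" for s t m
    unfolding z_def using orbit[OF _ _ sc] by (simp add: c_def phi_tc_of)
  have cond: "\<bar>c1\<bar> + \<bar>c4\<bar> + \<bar>c6\<bar> \<le> R \<longleftrightarrow>
     \<bar>c1 + c4 + c6\<bar> \<le> R \<and> \<bar>c1 + c4 - c6\<bar> \<le> R \<and> \<bar>c1 - c4 + c6\<bar> \<le> R \<and> \<bar>c1 - c4 - c6\<bar> \<le> R" for R :: real
    by (auto simp: abs_if split: if_splits)
  show ?thesis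
  proof
    assume "\<exists>B. \<forall>m\<ge>1. tc_norm ((Q3 (tc_of c1 c4 c6) ^^ m) tc_zero) \<le> B"
    then obtain B where B: "\<And>m. m \<ge> 1 \<Longrightarrow> tc_norm (z m) \<le> B" unfolding z_def c_def by blast
    have bd: "\<bar>c1 + s * c4 + t * c6\<bar> \<le> 2 * q ^ 3" if st: "s \<in> {-1,1}" "t \<in> {-1,1}" for s t
    proof -
      have "\<forall>m. \<bar>orb (c1 + s * c4 + t * c6) m\<bar> \<le> max 0 (2 * B)"
      proof
        fix m show "\<bar>orb (c1 + s * c4 + t * c6) m\<bar> \<le> max 0 (2 * B)"
        proof (cases "m = 0")
          case True then show ?thesis by simp
        next
          case False
          then have "tc_norm (z m) \<le> B" using B by simp
          moreover have "\<bar>phi s t (z m)\<bar> \<le> 2 * tc_norm (z m)" using phi_le[OF st zs] .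
          ultimately show ?thesis using zp[OF st] by fastforce
        qed
      qed
      then show ?thesis using bounded_iff[OF q] by blast
    qed
    show "\<bar>c1\<bar> + \<bar>c4\<bar> + \<bar>c6\<bar> \<le> 2 / (3 * sqrt 3)"
      unfolding r cond using bd[of 1 1] bd[of 1 "-1"] bd[of "-1" 1] bd[of "-1" "-1"] by simp
  next
    assume "\<bar>c1\<bar> + \<bar>c4\<bar> + \<bar>c6\<bar> \<le> 2 / (3 * sqrt 3)"
    then have cc: "\<bar>c1 + c4 + c6\<bar> \<le> 2 * q ^ 3" "\<bar>c1 + c4 - c6\<bar> \<le> 2 * q ^ 3"
       "\<bar>c1 - c4 + c6\<bar> \<le> 2 * q ^ 3" "\<bar>c1 - c4 - c6\<bar> \<le> 2 * q ^ 3" unfolding r cond by auto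
    have "tc_norm (z m) \<le> 4 * q" for m
    proof -
      have "tc_norm (z m) \<le> \<bar>phi 1 1 (z m)\<bar> + \<bar>phi 1 (-1) (z m)\<bar> + \<bar>phi (-1) 1 (z m)\<bar> + \<bar>phi (-1) (-1) (z m)\<bar>"
        by (rule norm_le[OF zs])
      moreover have "\<bar>phi 1 1 (z m)\<bar> \<le> q" using zp[of 1 1 m] orb_small[OF q cc(1)] by simp
      moreover have "\<bar>phi 1 (-1) (z m)\<bar> \<le> q" using zp[of 1 "-1" m] orb_small[OF q cc(2)] by simp
      moreover have "\<bar>phi (-1) 1 (z m)\<bar> \<le> q" using zp[of "-1" 1 m] orb_small[OF q cc(3)] by simp
      moreover have "\<bar>phi (-1) (-1) (z m)\<bar> \<le> q" using zp[of "-1" "-1" m] orb_small[OF q cc(4)] by simp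
      ultimately show ?thesis by linarith
    qed
    then show "\<exists>B. \<forall>m\<ge>1. tc_norm ((Q3 (tc_of c1 c4 c6) ^^ m) tc_zero) \<le> B"
      unfolding z_def c_def by blast
  qed
qed

theorem mainTheorem18:
  shows "perplexbric =
    {tc_of c1 c4 c6 | c1 c4 c6. \<bar>c1\<bar> + \<bar>c4\<bar> + \<bar>c6\<bar> \<le> 2 / (3 * sqrt 3)}"
  unfolding perplexbric_def by (simp only: key)
end
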